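(* Let $\kappa$ be a cardinal for which there exists a maximal independent family of size $\kappa$. Then there exists a maximal independent family of size $\kappa$ which is not densely maximal. In particular, there is always a maximal, non-densely maximal independent family of size $\mathfrak i$.
   Context: A family $\mathcal I \subseteq [\omega]^\omega$ is independent if for all finite disjoint $\mathcal A, \mathcal B \subseteq \mathcal I$ the set $\bigcap \mathcal A \setminus \bigcup \mathcal B$ is infinite; it is a maximal independent family (m.i.f.) if it is maximal under inclusion among independent families. $\mathfrak i$ denotes the least size of a maximal independent family. $\mathsf{FF}(\mathcal I)$ is the set of finite partial functions $h:\mathcal I \to 2$; for $h\in\mathsf{FF}(\mathcal I)$, $\mathcal I^h := \bigcap_{A \in \mathrm{dom}(h)} A^{h(A)}$ where $A^0 = A$ and $A^1 = \omega\setminus A$ (Boolean combinations). An independent family $\mathcal I$ is densely maximal if for every $X \in [\omega]^\omega$ and every $h \in \mathsf{FF}(\mathcal I)$ there is $h' \supseteq h$ in $\mathsf{FF}(\mathcal I)$ such that $\mathcal I^{h'} \setminus X$ or $\mathcal I^{h'} \cap X$ is finite. *)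

theory Defs
  imports Main "HOL-Library.Equipollence"
begin

definition independent :: "nat set set \<Rightarrow> bool" where
  "independent I \<longleftrightarrow> (\<forall>A\<in>I. infinite A) \<and>
     (\<forall>\<A> \<B>. finite \<A> \<and> finite \<B> \<and> \<A> \<subseteq> I \<and> \<B> \<subseteq> I \<and> \<A> \<inter> \<B> = {}
        \<longrightarrow> infinite (\<Inter>\<A> - \<Union>\<B>))"

definition max_independent :: "nat set set \<Rightarrow> bool" where
  "max_independent I \<longleftrightarrow> independent I \<and> (\<forall>J. independent J \<and> I \<subseteq> J \<longrightarrow> J = I)"

text \<open>FF(I): finite partial functions from I to 2 (2 = bool, False ~ 0, True ~ 1).\<close>

definition FF :: "nat set set \<Rightarrow> (nat set \<rightharpoonup> bool) set" where
  "FF I = {h. finite (dom h) \<and> dom h \<subseteq> I}"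

text \<open>Boolean combination I^h; A^0 = A, A^1 = omega - A; the empty intersection is omega.\<close>

definition bcomb :: "(nat set \<rightharpoonup> bool) \<Rightarrow> nat set" where
  "bcomb h = (\<Inter>A\<in>dom h. if h A = Some False then A else UNIV - A)"

definition densely_maximal :: "nat set set \<Rightarrow> bool" where
  "densely_maximal I \<longleftrightarrow>
     (\<forall>X. infinite X \<longrightarrow> (\<forall>h\<in>FF I. \<exists>h'\<in>FF I. h \<subseteq>\<^sub>m h' \<and>
        (finite (bcomb h' - X) \<or> finite (bcomb h' \<inter> X))))"

end

theory Submission
  imports Defs
begin


lemma bcomb_mem: "m \<in> bcomb h \<longleftrightarrow> (\<forall>B\<in>dom h. m \<in> B \<longleftrightarrow> h B = Some False)"
  unfolding bcomb_def by (auto split: if_splits)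

lemma pt: "(m \<in> B \<longleftrightarrow> h B = Some False) \<longleftrightarrow> ((h B = Some False \<longrightarrow> m \<in> B) \<and> (h B = Some True \<longrightarrow> m \<notin> B))"
  if "B \<in> dom h"
  using that by (cases "h B") auto

lemma bcomb_mem2: "m \<in> bcomb h \<longleftrightarrow> (\<forall>B. (h B = Some False \<longrightarrow> m \<in> B) \<and> (h B = Some True \<longrightarrow> m \<notin> B))"
  unfolding bcomb_mem using pt by (metis domIff option.distinct(1))

lemma bcomb_AB: "bcomb h = \<Inter>{A. h A = Some False} - \<Union>{A. h A = Some True}"
  by (auto simp: bcomb_mem2)

lemma independent_iff: "independent I \<longleftrightarrow> (\<forall>h\<in>FF I. infinite (bcomb h))"
proof
  assume I: "independent I"
  show "\<forall>h\<in>FF I. infinite (bcomb h)"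
  proof
    fix h assume h: "h \<in> FF I"
    have "finite {A. h A = Some False}" "finite {A. h A = Some True}"
      using h unfolding FF_def by (auto intro: finite_subset[of _ "dom h"])
    moreover have "{A. h A = Some False} \<subseteq> I" "{A. h A = Some True} \<subseteq> I"
      using h unfolding FF_def by auto
    moreover have "{A. h A = Some False} \<inter> {A. h A = Some True} = {}" by auto
    ultimately show "infinite (bcomb h)" using I unfolding independent_def bcomb_AB by blast
  qed
next
  assume H: "\<forall>h\<in>FF I. infinite (bcomb h)"
  show "independent I" unfolding independent_def
  proof (intro conjI allI impI ballI)
    fix A assume "A \<in> I"
    hence "[A \<mapsto> False] \<in> FF I" unfolding FF_def by auto
    moreover have "bcomb [A \<mapsto> False] = A" unfolding bcomb_def by auto
    ultimately show "infinite A" using H by metis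
  next
    fix \<A> \<B> :: "nat set set"
    assume a: "finite \<A> \<and> finite \<B> \<and> \<A> \<subseteq> I \<and> \<B> \<subseteq> I \<and> \<A> \<inter> \<B> = {}"
    define h where "h = (\<lambda>A. if A \<in> \<A> then Some False else if A \<in> \<B> then Some True else None)"
    have "dom h = \<A> \<union> \<B>" unfolding h_def by (auto split: if_splits)
    hence "h \<in> FF I" using a unfolding FF_def by auto
    moreover have "{A. h A = Some False} = \<A>" "{A. h A = Some True} = \<B>"
      using a unfolding h_def by auto
    ultimately show "infinite (\<Inter>\<A> - \<Union>\<B>)" using H bcomb_AB by metis
  qed
qed

lemma bcomb_upd: "bcomb (h(Y := Some b)) = bcomb (h(Y:=None)) \<inter> (if b then -Y else Y)"
proof (rule set_eqI)
  fix x
  have "x \<in> bcomb (h(Y := Some b)) \<longleftrightarrow> (\<forall>B\<in>dom (h(Y:=None)). x \<in> B \<longleftrightarrow> h B = Some False) \<and> (x \<in> Y \<longleftrightarrow> \<not> b)"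
    unfolding bcomb_mem by auto
  also have "\<dots> \<longleftrightarrow> x \<in> bcomb (h(Y:=None)) \<inter> (if b then -Y else Y)"
  proof -
    have e: "(\<forall>B\<in>dom (h(Y:=None)). x \<in> B \<longleftrightarrow> h B = Some False) \<longleftrightarrow> x \<in> bcomb (h(Y:=None))"
      unfolding bcomb_mem by (intro ball_cong refl) auto
    show ?thesis unfolding e by (cases b) simp_all
  qed
  finally show "x \<in> bcomb (h(Y := Some b)) \<longleftrightarrow> x \<in> bcomb (h(Y:=None)) \<inter> (if b then -Y else Y)" .
qed

lemma max_split:
  assumes "max_independent I"
  shows "\<exists>h\<in>FF I. finite (bcomb h - Y) \<or> finite (bcomb h \<inter> Y)"
proof (cases "Y \<in> I")
  case True
  hence "[Y \<mapsto> False] \<in> FF I" unfolding FF_def by auto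
  moreover have "bcomb [Y \<mapsto> False] = Y" unfolding bcomb_def by auto
  ultimately show ?thesis by (metis Diff_cancel finite.emptyI)
next
  case False
  have I: "independent I" using assms unfolding max_independent_def by auto
  have "\<not> independent (insert Y I)" using assms False unfolding max_independent_def by blast
  then obtain h where h: "h \<in> FF (insert Y I)" and fin: "finite (bcomb h)"
    unfolding independent_iff by blast
  define g where "g = h(Y := None)"
  have g: "g \<in> FF I" using h unfolding FF_def g_def by auto
  show ?thesis
  proof (cases "h Y")
    case None
    hence "g = h" unfolding g_def by auto
    thus ?thesis using g fin I independent_iff by blast
  next
    case (Some b)
    have "bcomb h = bcomb g \<inter> (if b then - Y else Y)"
      using Some bcomb_upd[of h Y b] unfolding g_def by (metis fun_upd_triv)
    thus ?thesis using g fin by (cases b) (auto simp: Diff_eq)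
  qed
qed

lemma split_max:
  assumes "independent J" "\<And>Y. \<exists>h\<in>FF J. finite (bcomb h - Y) \<or> finite (bcomb h \<inter> Y)"
  shows "max_independent J"
  unfolding max_independent_def
proof (intro conjI allI impI assms(1))
  fix K assume K: "independent K \<and> J \<subseteq> K"
  show "K = J"
  proof (rule ccontr)
    assume "K \<noteq> J"
    then obtain Y where Y: "Y \<in> K" "Y \<notin> J" using K by blast
    obtain h where h: "h \<in> FF J" and f: "finite (bcomb h - Y) \<or> finite (bcomb h \<inter> Y)"
      using assms(2) by blast
    have hY: "h Y = None" using h Y unfolding FF_def by auto
    have "h(Y \<mapsto> True) \<in> FF K" "h(Y \<mapsto> False) \<in> FF K" using h K Y unfolding FF_def by auto
    moreover have "bcomb (h(Y \<mapsto> True)) = bcomb h - Y" "bcomb (h(Y \<mapsto> False)) = bcomb h \<inter> Y"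
      using hY bcomb_upd[of h Y] by (simp_all add: Diff_eq fun_upd_idem)
    ultimately show False using f K independent_iff by metis
  qed
qed



lemma split_finite_family:
  fixes \<S> :: "nat set set"
  assumes fin: "finite \<S>" and inf: "\<And>S. S \<in> \<S> \<Longrightarrow> infinite S"
  shows "\<exists>Y. \<forall>S\<in>\<S>. infinite (S \<inter> Y) \<and> infinite (S - Y)"
proof -
  define nxt where "nxt = (\<lambda>a::nat. Suc (Max (insert a ((\<lambda>S. LEAST x. x \<in> S \<and> a \<le> x) ` \<S>))))"
  define a where "a = (\<lambda>j. (nxt ^^ j) 0)"
  have aS: "a (Suc j) = nxt (a j)" for j unfolding a_def by simp
  have fm: "finite (insert b ((\<lambda>S. LEAST x. x \<in> S \<and> b \<le> x) ` \<S>))" for b using fin by simp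
  have lt: "b < nxt b" for b
  proof -
    have "b \<le> Max (insert b ((\<lambda>S. LEAST x. x \<in> S \<and> b \<le> x) ` \<S>))"
      using Max_ge[OF fm[of b]] by blast
    thus ?thesis unfolding nxt_def by simp
  qed
  have sm: "strict_mono a" unfolding strict_mono_Suc_iff aS using lt by auto
  have hit: "\<exists>x\<in>S. b \<le> x \<and> x < nxt b" if "S \<in> \<S>" for S b
  proof -
    have "\<exists>x. x \<in> S \<and> b \<le> x" using inf[OF that] unfolding infinite_nat_iff_unbounded_le by blast
    hence L: "(LEAST x. x \<in> S \<and> b \<le> x) \<in> S \<and> b \<le> (LEAST x. x \<in> S \<and> b \<le> x)"
      by (rule LeastI_ex)
    have "(LEAST x. x \<in> S \<and> b \<le> x) \<le> Max (insert b ((\<lambda>S. LEAST x. x \<in> S \<and> b \<le> x) ` \<S>))"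
      using Max_ge[OF fm[of b]] that by blast
    hence "(LEAST x. x \<in> S \<and> b \<le> x) < nxt b" unfolding nxt_def by simp
    thus ?thesis using L by blast
  qed
  define Y where "Y = {m. \<exists>j. a (2*j) \<le> m \<and> m < a (2*j+1)}"
  have notY: "m \<notin> Y" if "a (2*j+1) \<le> m" "m < a (2*j+2)" for m j
  proof
    assume "m \<in> Y"
    then obtain i where i: "a (2*i) \<le> m" "m < a (2*i+1)" unfolding Y_def by blast
    show False
    proof (cases "i \<le> j")
      case True
      hence "a (2*i+1) \<le> a (2*j+1)" using strict_mono_less_eq[OF sm] by simp
      thus False using i that by simp
    next
      case False
      hence "a (2*j+2) \<le> a (2*i)" using strict_mono_less_eq[OF sm] by simp
      thus False using i that by simp
    qed
  qed
  show ?thesis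
  proof (intro exI ballI conjI)
    fix S assume S: "S \<in> \<S>"
    show "infinite (S \<inter> Y)" unfolding infinite_nat_iff_unbounded_le
    proof
      fix k
      obtain x where x: "x \<in> S" "a (2*k) \<le> x" "x < a (2*k+1)"
        using hit[OF S, of "a (2*k)"] aS by auto
      have "k \<le> a (2*k)" using strict_mono_imp_increasing[OF sm, of "2*k"] by simp
      moreover have "x \<in> Y" unfolding Y_def using x by blast
      ultimately show "\<exists>n\<ge>k. n \<in> S \<inter> Y" using x le_trans by blast
    qed
    show "infinite (S - Y)" unfolding infinite_nat_iff_unbounded_le
    proof
      fix k
      obtain x where x: "x \<in> S" "a (2*k+1) \<le> x" "x < a (2*k+2)"
        using hit[OF S, of "a (2*k+1)"] aS[of "2*k+1"] by auto
      have "k \<le> a (2*k+1)" using strict_mono_imp_increasing[OF sm, of "2*k+1"] by simp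
      moreover have "x \<notin> Y" using notY x by blast
      ultimately show "\<exists>n\<ge>k. n \<in> S - Y" using x le_trans by blast
    qed
  qed
qed


lemma max_infinite:
  assumes M: "max_independent I"
  shows "infinite I"
proof
  assume fI: "finite I"
  have indI: "independent I" using M unfolding max_independent_def by auto
  define atom where "atom = (\<lambda>m. {k::nat. \<forall>A\<in>I. k \<in> A \<longleftrightarrow> m \<in> A})"
  define at where "at = (\<lambda>T. {k::nat. \<forall>A\<in>I. k \<in> A \<longleftrightarrow> A \<in> T})"
  have "range atom \<subseteq> at ` Pow I"
  proof
    fix S assume "S \<in> range atom"
    then obtain m where "S = atom m" by blast
    hence "S = at (I \<inter> {A. m \<in> A})" unfolding atom_def at_def by auto
    thus "S \<in> at ` Pow I" by blast
  qed
  hence finS: "finite (range atom)" using fI finite_subset by blast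
  define gm where "gm = (\<lambda>m A. if A \<in> I then Some (m \<notin> A) else None)"
  have dgm: "dom (gm m) = I" for m unfolding gm_def dom_def by auto
  have gmFF: "gm m \<in> FF I" for m unfolding FF_def using fI dgm by auto
  have "bcomb (gm m) = atom m" for m
  proof -
    have "\<forall>B\<in>I. gm m B = Some (m \<notin> B)" unfolding gm_def by simp
    thus ?thesis unfolding set_eq_iff bcomb_mem dgm atom_def by auto
  qed
  hence infA: "infinite (atom m)" for m using gmFF indI independent_iff by metis
  have "\<exists>Y. \<forall>S\<in>range atom. infinite (S \<inter> Y) \<and> infinite (S - Y)"
    by (rule split_finite_family[OF finS]) (use infA in auto)
  then obtain Y where Y: "\<And>S. S \<in> range atom \<Longrightarrow> infinite (S \<inter> Y) \<and> infinite (S - Y)"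
    by blast
  have YI: "Y \<notin> I"
  proof
    assume "Y \<in> I"
    hence "atom 0 \<subseteq> Y \<or> atom 0 \<inter> Y = {}" unfolding atom_def by auto
    moreover have "infinite (atom 0 \<inter> Y)" "infinite (atom 0 - Y)" using Y by blast+
    ultimately show False by (metis Diff_eq_empty_iff finite.emptyI)
  qed
  have "independent (insert Y I)" unfolding independent_iff
  proof
    fix h assume h: "h \<in> FF (insert Y I)"
    define g where "g = h(Y := None)"
    have g: "g \<in> FF I" using h unfolding FF_def g_def by auto
    hence "infinite (bcomb g)" using indI independent_iff by blast
    hence "bcomb g \<noteq> {}" by (rule infinite_imp_nonempty)
    then obtain m where m: "m \<in> bcomb g" by blast
    have dg: "dom g \<subseteq> I" using g unfolding FF_def by auto
    have sub: "atom m \<subseteq> bcomb g"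
    proof
      fix k assume k: "k \<in> atom m"
      show "k \<in> bcomb g" unfolding bcomb_mem
      proof
        fix B assume B: "B \<in> dom g"
        hence "k \<in> B \<longleftrightarrow> m \<in> B" using k dg unfolding atom_def by auto
        thus "k \<in> B \<longleftrightarrow> g B = Some False" using m B unfolding bcomb_mem by auto
      qed
    qed
    show "infinite (bcomb h)"
    proof (cases "h Y")
      case None
      hence "h = g" unfolding g_def by auto
      thus ?thesis using infinite_super[OF sub infA] by simp
    next
      case (Some b)
      hence "h = g(Y := Some b)" unfolding g_def by auto
      hence e: "bcomb h = bcomb g \<inter> (if b then -Y else Y)"
        using bcomb_upd[of g Y b] unfolding g_def by simp
      show ?thesis
      proof (cases b)
        case True
        hence "atom m - Y \<subseteq> bcomb h" using e sub by auto
        thus ?thesis using Y[of "atom m"] infinite_super by blast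
      next
        case False
        hence "atom m \<inter> Y \<subseteq> bcomb h" using e sub by auto
        thus ?thesis using Y[of "atom m"] infinite_super by blast
      qed
    qed
  qed
  hence "insert Y I = I" using M unfolding max_independent_def by blast
  thus False using YI by blast
qed



definition F3 :: "nat set \<Rightarrow> nat set" where "F3 A = {m. m div 3 \<in> A}"
definition D3 :: "nat set" where "D3 = {m. m mod 3 \<noteq> 0}"

lemma injF3: "inj F3"
proof (rule injI)
  fix A B assume "F3 A = F3 B"
  hence "\<forall>n. (3*n \<in> F3 A) = (3*n \<in> F3 B)" by simp
  thus "A = B" unfolding F3_def by auto
qed

lemma bcomb_J:
  fixes I :: "nat set set" and h
  assumes dh: "dom h \<subseteq> insert D3 (F3 ` I)"
  defines "g \<equiv> (\<lambda>A. if A \<in> I then h (F3 A) else None)"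
  shows "m \<in> bcomb h \<longleftrightarrow> (h D3 = Some False \<longrightarrow> m \<in> D3) \<and> (h D3 = Some True \<longrightarrow> m \<notin> D3)
            \<and> m div 3 \<in> bcomb g"
proof -
  define P where "P = (\<lambda>B. (h B = Some False \<longrightarrow> m \<in> B) \<and> (h B = Some True \<longrightarrow> m \<notin> B))"
  have "(\<forall>B. P B) \<longleftrightarrow> P D3 \<and> (\<forall>A\<in>I. P (F3 A))"
  proof
    assume a: "P D3 \<and> (\<forall>A\<in>I. P (F3 A))"
    show "\<forall>B. P B"
    proof
      fix B show "P B"
      proof (cases "B \<in> dom h")
        case True
        then consider "B = D3" | A where "A \<in> I" "B = F3 A" using dh by blast
        thus ?thesis using a by cases auto
      next
        case False
        thus ?thesis unfolding P_def by auto
      qed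
    qed
  qed auto
  moreover have "(\<forall>A\<in>I. P (F3 A)) \<longleftrightarrow> m div 3 \<in> bcomb g"
    unfolding bcomb_mem2 P_def g_def F3_def by auto
  ultimately show ?thesis unfolding bcomb_mem2 P_def by blast
qed

lemma g_FF:
  assumes "h \<in> FF (insert D3 (F3 ` I))"
  shows "(\<lambda>A. if A \<in> I then h (F3 A) else None) \<in> FF I"
proof -
  have "dom (\<lambda>A. if A \<in> I then h (F3 A) else None) = F3 -` dom h \<inter> I"
    unfolding dom_def by auto
  moreover have "finite (F3 -` dom h \<inter> I)"
    using assms unfolding FF_def by (intro finite_vimage_IntI) (auto intro: inj_on_subset[OF injF3])
  ultimately show ?thesis unfolding FF_def by auto
qed

lemma d3a: "(3*n::nat) div 3 = n" "(3*n+1::nat) div 3 = n" "(3*n+2::nat) div 3 = n"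
  "3*n \<notin> D3" "3*n+1 \<in> D3" "3*n+2 \<in> D3"
  unfolding D3_def by (simp_all, presburger)

lemma part1:
  assumes M: "max_independent I"
  shows "\<exists>J. max_independent J \<and> J \<approx> I \<and> \<not> densely_maximal J"
proof -
  have indI: "independent I" using M unfolding max_independent_def by auto
  have infI: "infinite I" using max_infinite[OF M] .
  define J where "J = insert D3 (F3 ` I)"
  have injI: "inj_on F3 I" using inj_on_subset[OF injF3 subset_UNIV] .
  have "I \<approx> F3 ` I" unfolding eqpoll_def using bij_betw_imageI[OF injI refl] by blast
  hence e1: "F3 ` I \<approx> I" by (rule eqpoll_sym)
  have "infinite (F3 ` I)" using infI finite_image_iff[OF injI] by simp
  hence e2: "J \<approx> F3 ` I" unfolding J_def by (rule infinite_insert_eqpoll)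
  have JI: "J \<approx> I" using eqpoll_trans[OF e2 e1] .
  have gen: "m \<in> bcomb h \<longleftrightarrow> (h D3 = Some False \<longrightarrow> m \<in> D3) \<and> (h D3 = Some True \<longrightarrow> m \<notin> D3)
            \<and> m div 3 \<in> bcomb (\<lambda>A. if A \<in> I then h (F3 A) else None)" if "h \<in> FF J" for h m
  proof -
    have "dom h \<subseteq> insert D3 (F3 ` I)" using that unfolding FF_def J_def by simp
    from bcomb_J[OF this] show ?thesis .
  qed
  have gFF: "(\<lambda>A. if A \<in> I then h (F3 A) else None) \<in> FF I" if "h \<in> FF J" for h
    using g_FF that unfolding J_def by blast
  have indJ: "independent J" unfolding independent_iff
  proof
    fix h assume h: "h \<in> FF J"
    define g where "g = (\<lambda>A. if A \<in> I then h (F3 A) else None)"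
    have ig: "infinite (bcomb g)" using gFF[OF h] indI independent_iff unfolding g_def by blast
    define \<phi> where "\<phi> = (\<lambda>n::nat. if h D3 = Some True then 3*n else 3*n+1)"
    have "inj \<phi>" unfolding \<phi>_def inj_def by auto
    moreover have "\<phi> ` bcomb g \<subseteq> bcomb h"
    proof
      fix m assume "m \<in> \<phi> ` bcomb g"
      then obtain n where n: "n \<in> bcomb g" "m = \<phi> n" by blast
      show "m \<in> bcomb h" unfolding gen[OF h] using n d3a unfolding \<phi>_def g_def by auto
    qed
    ultimately show "infinite (bcomb h)" using ig finite_imageD infinite_super
      by (metis inj_on_subset subset_UNIV)
  qed
  have maxJ: "max_independent J"
  proof (rule split_max[OF indJ])
    fix Y :: "nat set"
    define Y0 where "Y0 = {n. 3*n \<in> Y}"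
    obtain g where g: "g \<in> FF I" and fg: "finite (bcomb g - Y0) \<or> finite (bcomb g \<inter> Y0)"
      using max_split[OF M] by blast
    have dg: "dom g \<subseteq> I" "finite (dom g)" using g unfolding FF_def by auto
    define h where "h = (\<lambda>B. if B = D3 then Some True else if B \<in> F3 ` I then g (inv F3 B) else None)"
    have "dom h \<subseteq> insert D3 (F3 ` dom g)"
    proof
      fix B assume "B \<in> dom h"
      show "B \<in> insert D3 (F3 ` dom g)"
      proof (cases "B = D3")
        case False
        then have B1: "B \<in> F3 ` I" and B2: "g (inv F3 B) \<noteq> None"
          using \<open>B \<in> dom h\<close> unfolding h_def by (auto split: if_splits)
        then obtain A where A: "A \<in> I" "B = F3 A" by blast
        hence "inv F3 B = A" using inv_f_f[OF injF3] by simp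
        thus ?thesis using A B2 by blast
      qed simp
    qed
    hence hFF: "h \<in> FF J" unfolding FF_def J_def using dg finite_subset by blast
    have DF: "F3 A \<noteq> D3" if "A \<in> I" for A
    proof -
      have "infinite A" using indI that unfolding independent_def by auto
      then obtain n where "n \<in> A" by (metis finite.emptyI ex_in_conv)
      hence "3*n \<in> F3 A" unfolding F3_def by simp
      thus ?thesis using d3a by auto
    qed
    have gh: "(\<lambda>A. if A \<in> I then h (F3 A) else None) = g"
    proof
      fix A show "(if A \<in> I then h (F3 A) else None) = g A"
      proof (cases "A \<in> I")
        case False
        hence "A \<notin> dom g" using dg by blast
        thus ?thesis using False by (simp add: domIff)
      qed (use DF in \<open>auto simp: h_def inv_f_f[OF injF3]\<close>)
    qed
    have bh: "m \<in> bcomb h \<longleftrightarrow> m \<notin> D3 \<and> m div 3 \<in> bcomb g" for m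
      using gen[OF hFF, of m] unfolding gh by (simp add: h_def)
    have m3: "m = 3 * (m div 3)" if "m \<notin> D3" for m using that unfolding D3_def by auto
    have "bcomb h - Y \<subseteq> (\<lambda>n. 3*n) ` (bcomb g - Y0)"
    proof
      fix m assume a: "m \<in> bcomb h - Y"
      hence b: "m \<notin> D3" "m div 3 \<in> bcomb g" using bh by auto
      hence c: "m = 3 * (m div 3)" using m3 by blast
      hence "m div 3 \<in> bcomb g - Y0" using a b unfolding Y0_def by auto
      thus "m \<in> (\<lambda>n. 3*n) ` (bcomb g - Y0)" using c by (metis image_eqI)
    qed
    moreover have "bcomb h \<inter> Y \<subseteq> (\<lambda>n. 3*n) ` (bcomb g \<inter> Y0)"
    proof
      fix m assume a: "m \<in> bcomb h \<inter> Y"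
      hence b: "m \<notin> D3" "m div 3 \<in> bcomb g" using bh by auto
      hence c: "m = 3 * (m div 3)" using m3 by blast
      hence "m div 3 \<in> bcomb g \<inter> Y0" using a b unfolding Y0_def by auto
      thus "m \<in> (\<lambda>n. 3*n) ` (bcomb g \<inter> Y0)" using c by (metis image_eqI)
    qed
    ultimately show "\<exists>h\<in>FF J. finite (bcomb h - Y) \<or> finite (bcomb h \<inter> Y)"
      using hFF fg by (meson finite_imageI finite_subset)
  qed
  have ndm: "\<not> densely_maximal J"
  proof
    assume dm: "densely_maximal J"
    define X where "X = {m::nat. m mod 3 = 1}"
    have "(\<lambda>n::nat. 3*n+1) ` UNIV \<subseteq> X" unfolding X_def by auto
    moreover have "inj (\<lambda>n::nat. 3*n+1)" unfolding inj_def by auto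
    ultimately have iX: "infinite X" using finite_imageD infinite_super infinite_UNIV_nat by metis
    have h0: "[D3 \<mapsto> False] \<in> FF J" unfolding FF_def J_def by auto
    obtain h where h: "h \<in> FF J" "[D3 \<mapsto> False] \<subseteq>\<^sub>m h"
      and fh: "finite (bcomb h - X) \<or> finite (bcomb h \<inter> X)"
      using dm iX h0 unfolding densely_maximal_def by blast
    have hD: "h D3 = Some False" using h(2) unfolding map_le_def by auto
    define g where "g = (\<lambda>A. if A \<in> I then h (F3 A) else None)"
    have ig: "infinite (bcomb g)" using gFF[OF h(1)] indI independent_iff unfolding g_def by blast
    have "(\<lambda>n. 3*n+1) ` bcomb g \<subseteq> bcomb h \<inter> X"
    proof
      fix m assume "m \<in> (\<lambda>n. 3*n+1) ` bcomb g"
      then obtain n where n: "n \<in> bcomb g" "m = 3*n+1" by blast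
      have "m \<in> bcomb h" using gen[OF h(1), of m] n d3a hD unfolding g_def by simp
      moreover have "m mod 3 = 1" using n(2) by simp
      ultimately show "m \<in> bcomb h \<inter> X" unfolding X_def by auto
    qed
    moreover have "(\<lambda>n. 3*n+2) ` bcomb g \<subseteq> bcomb h - X"
    proof
      fix m assume "m \<in> (\<lambda>n. 3*n+2) ` bcomb g"
      then obtain n where n: "n \<in> bcomb g" "m = 3*n+2" by blast
      have "m \<in> bcomb h" using gen[OF h(1), of m] n d3a hD unfolding g_def by simp
      moreover have "m mod 3 = 2" using n(2) by presburger
      ultimately show "m \<in> bcomb h - X" unfolding X_def by auto
    qed
    moreover have "inj (\<lambda>n::nat. 3*n+1)" "inj (\<lambda>n::nat. 3*n+2)" unfolding inj_def by auto
    ultimately show False using fh ig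
      by (meson finite_imageD finite_subset inj_on_subset subset_UNIV)
  qed
  show ?thesis using maxJ JI ndm by blast
qed



lemma exists_mif: "\<exists>I. max_independent I"
proof -
  have "\<forall>C\<in>chains {I. independent I}. \<Union>C \<in> {I. independent I}"
  proof
    fix C assume C: "C \<in> chains {I. independent I}"
    have Cind: "\<And>B. B \<in> C \<Longrightarrow> independent B" and ch: "chain\<^sub>\<subseteq> C"
      using C unfolding chains_def by auto
    show "\<Union>C \<in> {I. independent I}" unfolding mem_Collect_eq independent_iff
    proof
      fix h assume h: "h \<in> FF (\<Union>C)"
      show "infinite (bcomb h)"
      proof (cases "dom h = {}")
        case True
        hence "bcomb h = UNIV" unfolding set_eq_iff bcomb_mem True by simp
        thus ?thesis by simp
      next
        case False
        hence "C \<noteq> {}" using h unfolding FF_def by auto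
        then obtain B where B: "B \<in> C" "dom h \<subseteq> B"
          using finite_subset_Union_chain[of "dom h" C UNIV] h ch
          unfolding FF_def chain_subset_alt_def by blast
        hence "h \<in> FF B" using h unfolding FF_def by auto
        thus ?thesis using Cind[OF B(1)] independent_iff by blast
      qed
    qed
  qed
  from Zorn_Lemma[OF this] obtain M where "independent M"
    "\<forall>X\<in>{I. independent I}. M \<subseteq> X \<longrightarrow> X = M" by blast
  hence "max_independent M" unfolding max_independent_def by blast
  thus ?thesis by blast
qed

lemma minimal_mif: "\<exists>I0. max_independent I0 \<and> (\<forall>I. max_independent I \<longrightarrow> I0 \<lesssim> I)"
proof -
  obtain I1 where I1: "max_independent I1" using exists_mif by blast
  define Q where "Q = {r. \<exists>I. max_independent I \<and> r = card_of I}"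
  have "card_of I1 \<in> Q" unfolding Q_def using I1 by blast
  then obtain z where z: "z \<in> Q" and zmin: "\<And>y. (y, z) \<in> ordLess \<Longrightarrow> y \<notin> Q"
    using wfE_min[OF wf_ordLess] by metis
  then obtain I0 where I0: "max_independent I0" "z = card_of I0" unfolding Q_def by blast
  have "I0 \<lesssim> I" if "max_independent I" for I
  proof -
    have "card_of I \<in> Q" unfolding Q_def using that by blast
    hence "\<not> (card_of I, card_of I0) \<in> ordLess" using zmin I0 by blast
    hence "(card_of I0, card_of I) \<in> ordLeq"
      using not_ordLess_iff_ordLeq[OF card_of_Well_order card_of_Well_order] by blast
    thus ?thesis unfolding lepoll_def using card_of_ordLeq by blast
  qed
  thus ?thesis using I0 by blast
qed

theorem proposition2p4:
  shows "(\<forall>I. max_independent I \<longrightarrow>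
            (\<exists>J. max_independent J \<and> J \<approx> I \<and> \<not> densely_maximal J))
       \<and> (\<exists>J. max_independent J \<and> \<not> densely_maximal J \<and>
            (\<forall>I. max_independent I \<longrightarrow> J \<lesssim> I))"
proof
  show "\<forall>I. max_independent I \<longrightarrow> (\<exists>J. max_independent J \<and> J \<approx> I \<and> \<not> densely_maximal J)"
    using part1 by blast
  obtain I0 where I0: "max_independent I0" "\<forall>I. max_independent I \<longrightarrow> I0 \<lesssim> I"
    using minimal_mif by blast
  obtain J where J: "max_independent J" "J \<approx> I0" "\<not> densely_maximal J" using part1[OF I0(1)] by blast
  have "\<forall>I. max_independent I \<longrightarrow> J \<lesssim> I" using I0(2) J(2) lepoll_trans1 by blast
  thus "\<exists>J. max_independent J \<and> \<not> densely_maximal J \<and> (\<forall>I. max_independent I \<longrightarrow> J \<lesssim> I)"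
    using J by blast
qed


end
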